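(* Let $R$ be a proto-ranking on a finite set $\mathcal{X}$, and let $A\subseteq\mathcal{X}$ be such that $[x,y]_{R}\subseteq A$ for all $x,y\in A$ with $xRy$. Then the binary relation $R\cup A^2$ admits a complete and transitive extension.
   Context: A proto-ranking is an irreflexive and transitive binary relation. For a relation $Q$ and $a\,Q\,b$, the order interval is $[a,b]_Q=\{a,b\}\cup\{c: a\,Q\,c\,Q\,b\}$. A relation is complete if it is reflexive and total (for distinct $a,b$, $aQb$ or $bQa$). The strict part of $Q$ is $\{(a,b): aQb,\ \text{not } bQa\}$. A relation $Q'$ is an extension of $Q$ if $Q\subseteq Q'$ and the strict part of $Q$ is contained in the strict part of $Q'$. *)

theory Defs
  imports Main
begin

definition proto_ranking :: "'a rel \<Rightarrow> bool" where
  "proto_ranking Q \<longleftrightarrow> irrefl Q \<and> trans Q"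

text \<open>Order interval [a,b]_Q (meaningful when (a,b) in Q).\<close>
definition order_interval :: "'a rel \<Rightarrow> 'a \<Rightarrow> 'a \<Rightarrow> 'a set" where
  "order_interval Q a b = {a, b} \<union> {c. (a, c) \<in> Q \<and> (c, b) \<in> Q}"

definition complete_on :: "'a set \<Rightarrow> 'a rel \<Rightarrow> bool" where
  "complete_on X Q \<longleftrightarrow> refl_on X Q \<and> total_on X Q"

definition strict_part :: "'a rel \<Rightarrow> 'a rel" where
  "strict_part Q = {(a, b). (a, b) \<in> Q \<and> (b, a) \<notin> Q}"

definition is_extension :: "'a rel \<Rightarrow> 'a rel \<Rightarrow> bool" where
  "is_extension Q Q' \<longleftrightarrow> Q \<subseteq> Q' \<and> strict_part Q \<subseteq> strict_part Q'"

end

theory Submission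
  imports Defs
begin

theorem mainTheorem14:
  fixes X :: "'a set" and R :: "'a rel" and A :: "'a set"
  assumes "finite X"
    and "R \<subseteq> X \<times> X"
    and "proto_ranking R"
    and "A \<subseteq> X"
    and "\<forall>x\<in>A. \<forall>y\<in>A. (x, y) \<in> R \<longrightarrow> order_interval R x y \<subseteq> A"
  shows "\<exists>Q. Q \<subseteq> X \<times> X \<and> complete_on X Q \<and> trans Q \<and> is_extension (R \<union> A \<times> A) Q"
proof -
  have irr: "\<And>x. (x,x) \<notin> R" using assms(3) unfolding proto_ranking_def irrefl_def by blast
  have tr: "\<And>x y z. (x,y) \<in> R \<Longrightarrow> (y,z) \<in> R \<Longrightarrow> (x,z) \<in> R"
    using assms(3) unfolding proto_ranking_def trans_def by blast
  have intv: "\<And>x y c. x \<in> A \<Longrightarrow> y \<in> A \<Longrightarrow> (x,y) \<in> R \<Longrightarrow> (x,c) \<in> R \<Longrightarrow> (c,y) \<in> R \<Longrightarrow> c \<in> A"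
    using assms(5) unfolding order_interval_def by blast
  define U where "U = Id \<union> R \<union> {(x,y). \<exists>a b. a \<in> A \<and> b \<in> A \<and> (x = a \<or> (x,a) \<in> R) \<and> (b = y \<or> (b,y) \<in> R)}"
  have Urefl: "\<And>x. (x,x) \<in> U" unfolding U_def by blast
  have Utrans: "\<And>x y z. (x,y) \<in> U \<Longrightarrow> (y,z) \<in> U \<Longrightarrow> (x,z) \<in> U"
    unfolding U_def using tr by blast
  have SU: "R \<union> A \<times> A \<subseteq> U" unfolding U_def by blast
  have key: "(b,a) \<notin> U" if ab: "(a,b) \<in> R" and nA: "\<not> (a \<in> A \<and> b \<in> A)" for a b
  proof
    assume "(b,a) \<in> U"
    then consider "b = a" | "(b,a) \<in> R" | c d where "c \<in> A" "d \<in> A" "b = c \<or> (b,c) \<in> R" "d = a \<or> (d,a) \<in> R"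
      unfolding U_def by blast
    then show False
    proof cases
      case 1 then show ?thesis using ab irr by blast
    next
      case 2 then show ?thesis using ab irr tr by blast
    next
      case 3
      have dc: "(d,c) \<in> R" using 3 ab tr by blast
      have "a \<in> A" using 3 ab tr dc intv by blast
      moreover have "b \<in> A" using 3 ab tr dc intv by blast
      ultimately show ?thesis using nA by blast
    qed
  qed
  define f where "f x = card {z \<in> X. (z,x) \<in> U}" for x
  have fmono: "f x \<le> f y" if "(x,y) \<in> U" for x y
    unfolding f_def using that Utrans assms(1) by (intro card_mono) auto
  have fstrict: "f x < f y" if "(x,y) \<in> U" "(y,x) \<notin> U" "y \<in> X" for x y
    unfolding f_def
  proof (rule psubset_card_mono)
    show "finite {z \<in> X. (z, y) \<in> U}" using assms(1) by simp
    show "{z \<in> X. (z, x) \<in> U} \<subset> {z \<in> X. (z, y) \<in> U}"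
      using that Utrans Urefl by blast
  qed
  define Q where "Q = {(x,y). x \<in> X \<and> y \<in> X \<and> f x \<le> f y}"
  have "Q \<subseteq> X \<times> X" unfolding Q_def by auto
  moreover have "complete_on X Q" unfolding complete_on_def refl_on_def total_on_def Q_def by auto
  moreover have "trans Q" unfolding trans_def Q_def by auto
  moreover have "is_extension (R \<union> A \<times> A) Q"
    unfolding is_extension_def
  proof
    show "R \<union> A \<times> A \<subseteq> Q" unfolding Q_def using SU fmono assms(2,4) by blast
    show "strict_part (R \<union> A \<times> A) \<subseteq> strict_part Q"
    proof
      fix p assume "p \<in> strict_part (R \<union> A \<times> A)"
      then obtain a b where p: "p = (a,b)" "(a,b) \<in> R \<union> A \<times> A" "(b,a) \<notin> R \<union> A \<times> A"
        unfolding strict_part_def by blast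
      then have ab: "(a,b) \<in> R" "\<not> (a \<in> A \<and> b \<in> A)" by auto
      have "a \<in> X" "b \<in> X" using ab assms(2) by auto
      have "f a < f b" using fstrict key[OF ab] SU ab(1) \<open>b \<in> X\<close> by blast
      then show "p \<in> strict_part Q" using p(1) \<open>a \<in> X\<close> \<open>b \<in> X\<close>
        unfolding strict_part_def Q_def by auto
    qed
  qed
  ultimately show ?thesis by blast
qed

end
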